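(* Let $q : \mathbb{R}^n \to \mathbb{R}$ be a positive semidefinite quadratic form such that $\mathbf{E}(q) = 1$, where $\mathbf{E}$ denotes expectation with respect to the standard Gaussian measure $\mu$ on $\mathbb{R}^n$. Let $$C_0 = \frac{4}{\sqrt{2\pi}} \int_0^{+\infty} (\ln t)\, e^{-t^2/2}\, dt \approx -1.270362845.$$ Then $$C_0 \leq \mathbf{E}(\ln q) \leq 0 \qquad\text{and}\qquad 0 \leq \mathbf{E}(\ln^2 q) \leq 8.$$
   Context: The standard Gaussian measure $\mu$ on $\mathbb{R}^n$ has density $\psi(x) = (2\pi)^{-n/2}\exp\{-\|x\|^2/2\}$, with $\|x\|^2 = x_1^2+\dots+x_n^2$. For a $\mu$-integrable function $f$, $\mathbf{E}(f) = \int_{\mathbb{R}^n} f(x)\psi(x)\,dx$. *)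

theory Defs
  imports "HOL-Analysis.Analysis"
begin

definition std_gaussian :: "(real ^ 'n) measure" where
  "std_gaussian = density lborel
     (\<lambda>x. ennreal ((2 * pi) powr (- real CARD('n) / 2) * exp (- (norm x)\<^sup>2 / 2)))"

definition gaussE :: "(real ^ 'n \<Rightarrow> real) \<Rightarrow> real" where
  "gaussE f = integral\<^sup>L std_gaussian f"

definition quadratic_form :: "(real ^ 'n \<Rightarrow> real) \<Rightarrow> bool" where
  "quadratic_form q \<longleftrightarrow> (\<exists>A :: real ^ 'n ^ 'n. \<forall>x. q x = x \<bullet> (A *v x))"

definition C0 :: real where
  "C0 = 4 / sqrt (2 * pi) * (LBINT t:{0<..}. ln t * exp (- t\<^sup>2 / 2))"

end

theory Submission
  imports Defs "HOL-Probability.Probability" "HOL-Real_Asymp.Real_Asymp"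
begin
definition Qf :: "('n \<Rightarrow> 'n \<Rightarrow> real) \<Rightarrow> real^'n \<Rightarrow> real" where
  "Qf a x = (\<Sum>k\<in>UNIV. \<Sum>l\<in>UNIV. a k l * x$k * x$l)"

lemma Qf_shift:
  fixes a :: "'n::finite \<Rightarrow> 'n \<Rightarrow> real"
  assumes sym: "\<And>k l. a k l = a l k"
  shows "Qf a (x + t *\<^sub>R axis i 1) = Qf a x + 2*t*(\<Sum>j\<in>UNIV. a i j * x$j) + t\<^sup>2 * a i i"
proof -
  have "Qf a (x + t *\<^sub>R axis i 1) = (\<Sum>k\<in>UNIV. \<Sum>l\<in>UNIV. a k l * (x$k + t * (if k = i then 1 else 0)) * (x$l + t * (if l = i then 1 else 0)))"
    unfolding Qf_def by (simp add: axis_def)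
  also have "\<dots> = (\<Sum>k\<in>UNIV. \<Sum>l\<in>UNIV. a k l * x$k * x$l
      + (if l = i then t * a k i * x$k else 0) + (if k = i then t * a i l * x$l else 0)
      + (if k = i \<and> l = i then t\<^sup>2 * a i i else 0))"
    by (intro sum.cong refl) (auto simp: algebra_simps power2_eq_square)
  also have "\<dots> = Qf a x + (\<Sum>k\<in>UNIV. \<Sum>l\<in>UNIV. (if l = i then t * a k i * x$k else 0))
      + (\<Sum>k\<in>UNIV. \<Sum>l\<in>UNIV. (if k = i then t * a i l * x$l else 0))
      + (\<Sum>k\<in>UNIV. \<Sum>l\<in>UNIV. (if k = i \<and> l = i then t\<^sup>2 * a i i else 0))"
    unfolding Qf_def by (simp only: sum.distrib)
  also have "(\<Sum>k\<in>UNIV. \<Sum>l\<in>UNIV. (if l = i then t * a k i * x$k else 0)) = t * (\<Sum>k\<in>UNIV. a k i * x$k)"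
    by (simp add: sum_distrib_left algebra_simps)
  also have "(\<Sum>k\<in>UNIV. \<Sum>l\<in>UNIV. (if k = i then t * a i l * x$l else 0)) = t * (\<Sum>l\<in>UNIV. a i l * x$l)"
  proof -
    have "(\<Sum>k\<in>UNIV. \<Sum>l\<in>UNIV. (if k = i then t * a i l * x$l else 0)) = (\<Sum>k\<in>UNIV. if k = i then (\<Sum>l\<in>UNIV. t * a i l * x$l) else 0)"
      by (intro sum.cong refl) auto
    then show ?thesis by (simp add: sum_distrib_left algebra_simps)
  qed
  also have "(\<Sum>k\<in>UNIV. \<Sum>l\<in>UNIV. (if k = i \<and> l = i then t\<^sup>2 * a i i else 0)) = t\<^sup>2 * a i i"
  proof -
    have "(\<Sum>k\<in>UNIV. \<Sum>l\<in>UNIV. (if k = i \<and> l = i then t\<^sup>2 * a i i else 0)) = (\<Sum>k\<in>UNIV. if k = i then t\<^sup>2 * a i i else 0)"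
      by (intro sum.cong refl) auto
    then show ?thesis by simp
  qed
  also have "(\<Sum>k\<in>UNIV. a k i * x$k) = (\<Sum>l\<in>UNIV. a i l * x$l)"
    using sym by (intro sum.cong refl) auto
  finally show ?thesis by (simp add: algebra_simps)
qed

lemma Qf_zero[simp]: "Qf a 0 = 0"
  by (simp add: Qf_def)

lemma sos_aux:
  fixes K :: "'n::finite set"
  assumes "finite K"
  shows "\<forall>a::'n \<Rightarrow> 'n \<Rightarrow> real. (\<forall>k l. a k l = a l k) \<longrightarrow> (\<forall>k l. k \<notin> K \<or> l \<notin> K \<longrightarrow> a k l = 0)
     \<longrightarrow> (\<forall>x. Qf a x \<ge> 0) \<longrightarrow> (\<exists>m (V::nat \<Rightarrow> real^'n). \<forall>x. Qf a x = (\<Sum>k<m. (V k \<bullet> x)\<^sup>2))"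
  using assms
proof (induction K rule: finite_induct)
  case empty
  show ?case
  proof (intro allI impI)
    fix a :: "'n \<Rightarrow> 'n \<Rightarrow> real"
    assume "\<forall>k l. k \<notin> {} \<or> l \<notin> {} \<longrightarrow> a k l = 0"
    then have "\<And>x. Qf a x = 0" by (simp add: Qf_def)
    then show "\<exists>m (V::nat \<Rightarrow> real^'n). \<forall>x. Qf a x = (\<Sum>k<m. (V k \<bullet> x)\<^sup>2)"
      by (intro exI[of _ 0]) auto
  qed
next
  case (insert i K)
  show ?case
  proof (intro allI impI)
    fix a :: "'n \<Rightarrow> 'n \<Rightarrow> real"
    assume sym: "\<forall>k l. a k l = a l k"
      and supp: "\<forall>k l. k \<notin> insert i K \<or> l \<notin> insert i K \<longrightarrow> a k l = 0"
      and psd: "\<forall>x. 0 \<le> Qf a x"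
    define L where "L x = (\<Sum>j\<in>UNIV. a i j * x$j)" for x :: "real^'n"
    have shift: "Qf a (x + t *\<^sub>R axis i 1) = Qf a x + 2*t*L x + t\<^sup>2 * a i i" for x t
      unfolding L_def by (rule Qf_shift) (use sym in auto)
    have aii: "a i i \<ge> 0"
    proof -
      have "Qf a (axis i 1) = a i i" using shift[of 0 1] by (simp add: L_def)
      then show ?thesis using psd by metis
    qed
    show "\<exists>m (V::nat \<Rightarrow> real^'n). \<forall>x. Qf a x = (\<Sum>k<m. (V k \<bullet> x)\<^sup>2)"
    proof (cases "a i i = 0")
      case True
      have L0: "L x = 0" for x
      proof (rule ccontr)
        assume nz: "L x \<noteq> 0"
        define t where "t = - (Qf a x + 1) / (2 * L x)"
        have "Qf a (x + t *\<^sub>R axis i 1) = Qf a x + 2*t*L x" using shift True by simp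
        also have "\<dots> = -1" using nz by (simp add: t_def field_simps)
        finally show False using psd[rule_format, of "x + t *\<^sub>R axis i 1"] by linarith
      qed
      have aij: "a i j = 0" for j
        using L0[of "axis j 1"] by (simp add: L_def axis_def if_distrib sum.delta cong: if_cong)
      have "\<forall>k l. k \<notin> K \<or> l \<notin> K \<longrightarrow> a k l = 0"
        using supp aij sym by (metis insert_iff)
      then show ?thesis using insert.IH sym psd by blast
    next
      case False
      with aii have pos: "a i i > 0" by simp
      define a' where "a' k l = a k l - a i k * a i l / a i i" for k l
      have Qa': "Qf a' x = Qf a x - (L x)\<^sup>2 / a i i" for x
      proof -
        have "Qf a' x = Qf a x - (\<Sum>k\<in>UNIV. \<Sum>l\<in>UNIV. (a i k * x$k) * (a i l * x$l)) / a i i"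
          unfolding Qf_def a'_def
          by (simp add: sum_subtractf sum_divide_distrib algebra_simps)
        also have "(\<Sum>k\<in>UNIV. \<Sum>l\<in>UNIV. (a i k * x$k) * (a i l * x$l)) = (L x)\<^sup>2"
          unfolding L_def power2_eq_square sum_product by simp
        finally show ?thesis .
      qed
      have psd': "\<forall>x. 0 \<le> Qf a' x"
      proof
        fix x
        have "Qf a (x + (- L x / a i i) *\<^sub>R axis i 1) = Qf a x + 2*(- L x / a i i)*L x + (- L x / a i i)\<^sup>2 * a i i"
          by (rule shift)
        also have "\<dots> = Qf a x - (L x)\<^sup>2 / a i i"
          using pos by (simp add: field_simps power2_eq_square)
        finally have "Qf a (x + (- L x / a i i) *\<^sub>R axis i 1) = Qf a x - (L x)\<^sup>2 / a i i" .
        then show "0 \<le> Qf a' x" using psd Qa' by metis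
      qed
      have sym': "\<forall>k l. a' k l = a' l k" using sym by (simp add: a'_def)
      have supp': "\<forall>k l. k \<notin> K \<or> l \<notin> K \<longrightarrow> a' k l = 0"
      proof (intro allI impI)
        fix k l assume kl: "k \<notin> K \<or> l \<notin> K"
        have z: "a j l' = 0 \<and> a l' j = 0" if "j \<notin> insert i K" for j l'
          using supp that by blast
        show "a' k l = 0"
        proof (cases "k \<notin> K")
          case True
          show ?thesis
          proof (cases "k = i")
            case True then show ?thesis using pos by (simp add: a'_def)
          next
            case False then have "k \<notin> insert i K" using \<open>k \<notin> K\<close> by simp
            then show ?thesis using z[of k] by (simp add: a'_def)
          qed
        next
          case False
          then have "l \<notin> K" using kl by simp
          show ?thesis
          proof (cases "l = i")
            case True then show ?thesis using pos sym by (simp add: a'_def)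
          next
            case False then have "l \<notin> insert i K" using \<open>l \<notin> K\<close> by simp
            then show ?thesis using z[of l] by (simp add: a'_def)
          qed
        qed
      qed
      obtain m :: nat and V :: "nat \<Rightarrow> real^'n" where V: "\<forall>x. Qf a' x = (\<Sum>k<m. (V k \<bullet> x)\<^sup>2)"
        using insert.IH sym' supp' psd' by blast
      define w :: "real^'n" where "w = (\<chi> j. a i j / sqrt (a i i))"
      have w: "(w \<bullet> x)\<^sup>2 = (L x)\<^sup>2 / a i i" for x
      proof -
        have "w \<bullet> x = L x / sqrt (a i i)"
          unfolding w_def L_def inner_vec_def by (simp add: sum_divide_distrib)
        then show ?thesis using pos by (simp add: power_divide)
      qed
      show ?thesis
      proof (intro exI allI)
        fix x
        have "Qf a x = Qf a' x + (w \<bullet> x)\<^sup>2" using Qa' w by simp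
        also have "\<dots> = (\<Sum>k<Suc m. ((V(m := w)) k \<bullet> x)\<^sup>2)"
          using V by simp
        finally show "Qf a x = (\<Sum>k<Suc m. ((V(m := w)) k \<bullet> x)\<^sup>2)" .
      qed
    qed
  qed
qed

lemma quadratic_form_sos:
  fixes q :: "real^'n::finite \<Rightarrow> real"
  assumes "quadratic_form q" "\<forall>x. q x \<ge> 0"
  shows "\<exists>m (V::nat \<Rightarrow> real^'n). \<forall>x. q x = (\<Sum>k<m. (V k \<bullet> x)\<^sup>2)"
proof -
  obtain A :: "real^'n^'n" where A: "\<forall>x. q x = x \<bullet> (A *v x)"
    using assms(1) unfolding quadratic_form_def by blast
  define a where "a k l = (A$k$l + A$l$k) / 2" for k l
  have qa: "Qf a x = q x" for x
  proof -
    have "Qf a x = (\<Sum>k\<in>UNIV. \<Sum>l\<in>UNIV. (A$k$l * x$k * x$l + A$l$k * x$k * x$l) / 2)"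
      unfolding Qf_def a_def by (intro sum.cong refl) (simp add: field_simps)
    also have "\<dots> = ((\<Sum>k\<in>UNIV. \<Sum>l\<in>UNIV. A$k$l * x$k * x$l) + (\<Sum>k\<in>UNIV. \<Sum>l\<in>UNIV. A$l$k * x$k * x$l)) / 2"
      by (simp add: sum.distrib sum_divide_distrib add_divide_distrib)
    also have "(\<Sum>k\<in>UNIV. \<Sum>l\<in>UNIV. A$l$k * x$k * x$l) = (\<Sum>k\<in>UNIV. \<Sum>l\<in>UNIV. A$k$l * x$k * x$l)"
      by (subst sum.swap) (simp add: algebra_simps)
    also have "(\<Sum>k\<in>UNIV. \<Sum>l\<in>UNIV. A$k$l * x$k * x$l) = q x"
    proof -
      have "q x = (\<Sum>k\<in>UNIV. \<Sum>l\<in>UNIV. x$k * (A$k$l * x$l))"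
        by (simp add: A inner_vec_def matrix_vector_mult_def sum_distrib_left)
      then show ?thesis by (simp add: algebra_simps)
    qed
    finally show ?thesis by simp
  qed
  have sy: "\<forall>k l. a k l = a l k" by (simp add: a_def)
  have ps: "\<forall>x. 0 \<le> Qf a x" using qa assms(2) by simp
  have "\<exists>m (V::nat \<Rightarrow> real^'n). \<forall>x. Qf a x = (\<Sum>k<m. (V k \<bullet> x)\<^sup>2)"
    using sos_aux[OF finite_class.finite_UNIV, rule_format, of a] sy ps by simp
  then obtain m :: nat and V :: "nat \<Rightarrow> real^'n" where "\<forall>x. Qf a x = (\<Sum>k<m. (V k \<bullet> x)\<^sup>2)"
    by blast
  then have "\<forall>x. q x = (\<Sum>k<m. (V k \<bullet> x)\<^sup>2)" using qa by simp
  then show ?thesis by blast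
qed

definition N01 :: "real measure" where
  "N01 = density lborel (\<lambda>x. ennreal (std_normal_density x))"

lemma prob_space_N01: "prob_space N01"
  unfolding N01_def by (rule prob_space_normal_density) simp

lemma sets_N01[measurable_cong, simp]: "sets N01 = sets borel"
  by (simp add: N01_def)

lemma space_N01[simp]: "space N01 = UNIV"
  by (simp add: N01_def)

lemma indicator_PiE_prod:
  assumes "x \<in> extensional I" "finite I"
  shows "indicator (PiE I A) x = (\<Prod>i\<in>I. indicator (A i) (x i) :: ennreal)"
proof (cases "x \<in> PiE I A")
  case True
  then show ?thesis by (auto simp: indicator_def PiE_iff)
next
  case False
  with assms(1) obtain i where "i \<in> I" "x i \<notin> A i"
    by (auto simp: PiE_iff extensional_def)
  then show ?thesis using False assms(2) by (auto simp: indicator_def intro!: prod_zero)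
qed

lemma PiM_N01_density:
  "density (PiM (Basis :: ('a::euclidean_space) set) (\<lambda>_. lborel)) (\<lambda>f. \<Prod>b\<in>Basis. ennreal (std_normal_density (f b)))
     = PiM Basis (\<lambda>_. N01)"
proof -
  interpret N: product_sigma_finite "\<lambda>_::'a. N01"
    by (simp add: product_sigma_finite_def prob_space_N01 prob_space_imp_sigma_finite)
  interpret L: product_sigma_finite "\<lambda>_::'a. lborel"
    by (simp add: product_sigma_finite_def sigma_finite_lborel)
  show ?thesis
  proof (rule N.PiM_eqI)
    show "finite (Basis :: 'a set)" by simp
    show "sets (density (Pi\<^sub>M Basis (\<lambda>_. lborel)) (\<lambda>f. \<Prod>b\<in>Basis. ennreal (std_normal_density (f b)))) = sets (Pi\<^sub>M Basis (\<lambda>_. N01))"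
      unfolding sets_density by (rule sets_PiM_cong) simp_all
  next
    fix A assume A: "\<And>i. i \<in> (Basis :: 'a set) \<Longrightarrow> A i \<in> sets N01"
    have A': "A i \<in> sets borel" if "i \<in> Basis" for i using A[OF that] by simp
    have "emeasure (density (Pi\<^sub>M Basis (\<lambda>_. lborel)) (\<lambda>f. \<Prod>b\<in>Basis. ennreal (std_normal_density (f b)))) (PiE Basis A)
       = (\<integral>\<^sup>+ f. (\<Prod>b\<in>Basis. ennreal (std_normal_density (f b))) * indicator (PiE Basis A) f \<partial>Pi\<^sub>M Basis (\<lambda>_. lborel))"
    proof (rule emeasure_density)
      show "(\<lambda>f. \<Prod>b\<in>Basis. ennreal (std_normal_density (f b))) \<in> borel_measurable (Pi\<^sub>M Basis (\<lambda>_. lborel))"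
        by measurable
      show "PiE Basis A \<in> sets (Pi\<^sub>M Basis (\<lambda>_. lborel))"
        by (rule sets_PiM_I_finite) (simp_all add: A')
    qed
    also have "\<dots> = (\<integral>\<^sup>+ f. (\<Prod>b\<in>Basis. ennreal (std_normal_density (f b)) * indicator (A b) (f b)) \<partial>Pi\<^sub>M Basis (\<lambda>_. lborel))"
      by (intro nn_integral_cong) (simp add: indicator_PiE_prod space_PiM PiE_iff prod.distrib)
    also have "\<dots> = (\<Prod>b\<in>Basis. \<integral>\<^sup>+ x. ennreal (std_normal_density x) * indicator (A b) x \<partial>lborel)"
    proof (rule L.product_nn_integral_prod)
      fix b :: 'a assume "b \<in> Basis"
      then have [measurable]: "A b \<in> sets borel" by (rule A')
      show "(\<lambda>x. ennreal (std_normal_density x) * indicator (A b) x) \<in> borel_measurable lborel"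
        by measurable
    qed simp
    also have "\<dots> = (\<Prod>b\<in>Basis. emeasure N01 (A b))"
      by (intro prod.cong refl) (simp add: N01_def emeasure_density A')
    finally show "emeasure (density (Pi\<^sub>M Basis (\<lambda>_. lborel)) (\<lambda>f. \<Prod>b\<in>Basis. ennreal (std_normal_density (f b)))) (PiE Basis A)
       = (\<Prod>b\<in>Basis. emeasure N01 (A b))" .
  qed
qed

lemma norm_sum_Basis_sq:
  "(norm (\<Sum>b\<in>Basis. f b *\<^sub>R b :: 'a::euclidean_space))\<^sup>2 = (\<Sum>b\<in>Basis. (f b)\<^sup>2)"
proof -
  have "(norm (\<Sum>b\<in>Basis. f b *\<^sub>R b :: 'a))\<^sup>2 = (\<Sum>b\<in>Basis. f b *\<^sub>R b :: 'a) \<bullet> (\<Sum>b\<in>Basis. f b *\<^sub>R b)"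
    by (simp add: power2_norm_eq_inner)
  also have "\<dots> = (\<Sum>b\<in>Basis. (f b)\<^sup>2)"
    by (subst euclidean_inner) (simp add: power2_eq_square)
  finally show ?thesis .
qed

lemma gauss_product:
  "(std_gaussian :: (real^'n::finite) measure) =
     distr (PiM Basis (\<lambda>_. N01)) borel (\<lambda>f. \<Sum>b\<in>Basis. f b *\<^sub>R b)"
proof -
  define G :: "real^'n \<Rightarrow> ennreal" where
    "G x = ennreal ((2 * pi) powr (- real CARD('n) / 2) * exp (- (norm x)\<^sup>2 / 2))" for x
  define T :: "(real^'n \<Rightarrow> real) \<Rightarrow> real^'n" where "T f = (\<Sum>b\<in>Basis. f b *\<^sub>R b)" for f
  have "std_gaussian = density lborel G"
    unfolding std_gaussian_def G_def ..
  also have "\<dots> = density (distr (PiM Basis (\<lambda>_. lborel)) borel T) G"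
    unfolding T_def[abs_def] by (subst lborel_eq) (rule refl)
  also have "\<dots> = distr (density (PiM Basis (\<lambda>_. lborel)) (\<lambda>f. G (T f))) borel T"
    by (rule density_distr) (auto simp: G_def[abs_def] T_def[abs_def])
  also have "density (PiM Basis (\<lambda>_. lborel)) (\<lambda>f. G (T f)) =
     density (PiM Basis (\<lambda>_. lborel)) (\<lambda>f. \<Prod>b\<in>Basis. ennreal (std_normal_density (f b)))"
  proof (rule density_cong)
    show "(\<lambda>f. G (T f)) \<in> borel_measurable (Pi\<^sub>M Basis (\<lambda>_. lborel))"
      by (auto simp: G_def T_def)
    show "(\<lambda>f. \<Prod>b\<in>Basis. ennreal (std_normal_density (f b))) \<in> borel_measurable (Pi\<^sub>M Basis (\<lambda>_. lborel))"
      by measurable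
    show "AE f in Pi\<^sub>M Basis (\<lambda>_. lborel). G (T f) = (\<Prod>b\<in>Basis. ennreal (std_normal_density (f b)))"
    proof (intro AE_I2)
      fix f :: "real^'n \<Rightarrow> real"
      have c: "(2 * pi) powr (- real CARD('n) / 2) = (\<Prod>b\<in>(Basis :: (real^'n) set). 1 / sqrt (2 * pi))"
      proof -
        have "(\<Prod>b\<in>(Basis :: (real^'n) set). 1 / sqrt (2 * pi)) = (1 / sqrt (2 * pi)) ^ CARD('n)"
          by simp
        also have "\<dots> = ((2 * pi) powr (- (1 / 2))) ^ CARD('n)"
          using powr_half_sqrt[of "2*pi"] by (simp add: powr_minus_divide)
        also have "((2 * pi) powr (- (1 / 2))) ^ CARD('n) = ((2 * pi) powr (- (1 / 2))) powr (real CARD('n))"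
          by (rule powr_realpow[symmetric]) simp
        also have "\<dots> = (2 * pi) powr (- real CARD('n) / 2)"
          by (simp only: powr_powr) (simp add: field_simps)
        finally show ?thesis by simp
      qed
      have e: "exp (- (norm (T f))\<^sup>2 / 2) = (\<Prod>b\<in>(Basis :: (real^'n) set). exp (- (f b)\<^sup>2 / 2))"
        unfolding T_def norm_sum_Basis_sq
        by (simp add: exp_sum[symmetric] sum_negf sum_divide_distrib)
      have "G (T f) = ennreal (\<Prod>b\<in>Basis. 1 / sqrt (2 * pi) * exp (- (f b)\<^sup>2 / 2))"
        unfolding G_def c e by (simp only: prod.distrib)
      also have "\<dots> = (\<Prod>b\<in>Basis. ennreal (std_normal_density (f b)))"
        unfolding std_normal_density_def by (rule prod_ennreal[symmetric]) simp
      finally show "G (T f) = (\<Prod>b\<in>Basis. ennreal (std_normal_density (f b)))" .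
    qed
  qed
  also note PiM_N01_density
  finally show ?thesis by (simp add: T_def)
qed

lemma prob_space_PN: "prob_space (PiM (Basis::'a::euclidean_space set) (\<lambda>_. N01))"
  by (intro prob_space_PiM prob_space_N01)

lemma sets_std_gaussian[measurable_cong, simp]: "sets std_gaussian = sets borel"
  by (simp add: std_gaussian_def)

lemma space_std_gaussian[simp]: "space std_gaussian = UNIV"
  by (simp add: std_gaussian_def)

lemma prob_space_std_gaussian: "prob_space (std_gaussian :: (real^'n::finite) measure)"
  unfolding gauss_product by (intro prob_space.prob_space_distr prob_space_PN) measurable

lemma coord_indep:
  "prob_space.indep_vars (PiM (Basis::'a::euclidean_space set) (\<lambda>_. N01)) (\<lambda>_. borel) (\<lambda>b f. f b) Basis"
proof -
  let ?P = "PiM (Basis::'a set) (\<lambda>_. N01)"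
  interpret P: prob_space ?P by (rule prob_space_PN)
  have "P.indep_vars (\<lambda>_. borel) (\<lambda>b f. f b) Basis \<longleftrightarrow>
     distr ?P (PiM Basis (\<lambda>_. borel)) (\<lambda>x. \<lambda>i\<in>Basis. x i) = PiM Basis (\<lambda>i. distr ?P borel (\<lambda>f. f i))"
    by (rule P.indep_vars_iff_distr_eq_PiM') auto
  also have "distr ?P (PiM Basis (\<lambda>_. borel)) (\<lambda>x. \<lambda>i\<in>Basis. x i) = distr ?P ?P (\<lambda>x. x)"
    by (intro distr_cong refl sets_PiM_cong) (auto simp: space_PiM PiE_def extensional_restrict)
  also have "\<dots> = ?P" by (rule distr_id2) simp
  also have "PiM Basis (\<lambda>i. distr ?P borel (\<lambda>f. f i)) = PiM Basis (\<lambda>i. distr ?P N01 (\<lambda>f. f i))"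
    by (intro PiM_cong refl distr_cong) auto
  also have "\<dots> = ?P"
    by (intro PiM_cong refl distr_PiM_component prob_space_N01)
  finally show ?thesis by simp
qed

lemma coord_distributed:
  assumes "b \<in> (Basis::'a::euclidean_space set)"
  shows "distributed (PiM Basis (\<lambda>_. N01)) lborel (\<lambda>f. f b) (\<lambda>x. ennreal (std_normal_density x))"
  unfolding distributed_def
proof (intro conjI)
  have "distr (PiM Basis (\<lambda>_. N01)) lborel (\<lambda>f. f b) = distr (PiM Basis (\<lambda>_. N01)) N01 (\<lambda>f. f b)"
    by (intro distr_cong refl) auto
  also have "\<dots> = N01" by (rule distr_PiM_component[OF prob_space_N01 assms])
  finally show "distr (PiM Basis (\<lambda>_. N01)) lborel (\<lambda>f. f b) = density lborel (\<lambda>x. ennreal (std_normal_density x))"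
    by (simp add: N01_def)
qed (use assms in auto)

lemma gauss_marginal:
  fixes u :: "real^'n::finite"
  assumes u: "norm u = 1"
  shows "distr std_gaussian borel (\<lambda>x. u \<bullet> x) = N01"
proof -
  let ?P = "PiM (Basis::(real^'n) set) (\<lambda>_. N01)"
  interpret P: prob_space ?P by (rule prob_space_PN)
  define I where "I = {b\<in>(Basis::(real^'n) set). u \<bullet> b \<noteq> 0}"
  have fin: "finite I" by (simp add: I_def)
  have "(\<Sum>b\<in>Basis. (u \<bullet> b)\<^sup>2) = u \<bullet> u"
    by (simp add: euclidean_inner[of u u] power2_eq_square)
  also have "\<dots> = (norm u)\<^sup>2" by (simp add: power2_norm_eq_inner)
  also have "(\<Sum>b\<in>Basis. (u \<bullet> b)\<^sup>2) = (\<Sum>b\<in>I. (u \<bullet> b)\<^sup>2)"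
    by (rule sum.mono_neutral_right) (auto simp: I_def)
  finally have sq: "(\<Sum>b\<in>I. (u \<bullet> b)\<^sup>2) = 1" using u by simp
  then have ne: "I \<noteq> {}" by auto
  have ind: "P.indep_vars (\<lambda>_. borel) (\<lambda>b f. (u \<bullet> b) * f b) I"
  proof -
    have "P.indep_vars (\<lambda>_. borel) (\<lambda>b f. f b) I"
      by (rule P.indep_vars_subset[OF coord_indep]) (auto simp: I_def)
    then show ?thesis
      by (rule P.indep_vars_compose2[where Y="\<lambda>b x. (u \<bullet> b) * x"]) auto
  qed
  have nd: "distributed ?P lborel (\<lambda>f. (u \<bullet> b) * f b) (normal_density 0 \<bar>u \<bullet> b\<bar>)" if "b \<in> I" for b
  proof -
    have "distributed ?P lborel (\<lambda>f. 0 + (u \<bullet> b) * f b) (normal_density (0 + (u \<bullet> b) * 0) (\<bar>u \<bullet> b\<bar> * 1))"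
      by (rule P.normal_density_affine[OF coord_distributed]) (use that in \<open>auto simp: I_def\<close>)
    then show ?thesis by simp
  qed
  have "distributed ?P lborel (\<lambda>f. \<Sum>b\<in>I. (u \<bullet> b) * f b)
          (normal_density (\<Sum>b\<in>I. 0) (sqrt (\<Sum>b\<in>I. (\<bar>u \<bullet> b\<bar>)\<^sup>2)))"
    by (rule P.sum_indep_normal[OF fin ne ind]) (use nd in \<open>auto simp: I_def\<close>)
  then have D: "distributed ?P lborel (\<lambda>f. \<Sum>b\<in>I. (u \<bullet> b) * f b) std_normal_density"
    using sq by simp
  have "distr std_gaussian borel (\<lambda>x. u \<bullet> x) =
      distr (distr ?P borel (\<lambda>f. \<Sum>b\<in>Basis. f b *\<^sub>R b)) borel (\<lambda>x. u \<bullet> x)"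
    by (simp add: gauss_product)
  also have "\<dots> = distr ?P borel (\<lambda>f. u \<bullet> (\<Sum>b\<in>Basis. f b *\<^sub>R b))"
    by (subst distr_distr) (auto simp: comp_def)
  also have "\<dots> = distr ?P lborel (\<lambda>f. \<Sum>b\<in>I. (u \<bullet> b) * f b)"
  proof (intro distr_cong refl)
    fix f :: "real^'n \<Rightarrow> real"
    have "u \<bullet> (\<Sum>b\<in>Basis. f b *\<^sub>R b) = (\<Sum>b\<in>Basis. (u \<bullet> b) * f b)"
      by (simp add: inner_sum_right mult.commute)
    also have "\<dots> = (\<Sum>b\<in>I. (u \<bullet> b) * f b)"
      by (rule sum.mono_neutral_right) (auto simp: I_def)
    finally show "u \<bullet> (\<Sum>b\<in>Basis. f b *\<^sub>R b) = (\<Sum>b\<in>I. (u \<bullet> b) * f b)" .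
  qed simp
  also have "\<dots> = N01"
    using D by (simp add: distributed_def N01_def)
  finally show ?thesis .
qed

lemma gauss_marginal_integral:
  fixes u :: "real^'n::finite" and f :: "real \<Rightarrow> real"
  assumes u: "norm u = 1" and f[measurable]: "f \<in> borel_measurable borel"
  shows "integrable std_gaussian (\<lambda>x. f (u \<bullet> x)) \<longleftrightarrow> integrable lborel (\<lambda>t. std_normal_density t * f t)"
    and "integral\<^sup>L std_gaussian (\<lambda>x. f (u \<bullet> x)) = integral\<^sup>L lborel (\<lambda>t. std_normal_density t * f t)"
proof -
  have m: "(\<lambda>x. u \<bullet> x) \<in> measurable std_gaussian borel" by measurable
  have "integrable std_gaussian (\<lambda>x. f (u \<bullet> x)) \<longleftrightarrow> integrable (distr std_gaussian borel (\<lambda>x. u \<bullet> x)) f"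
    by (rule integrable_distr_eq[OF m f, symmetric])
  also have "\<dots> \<longleftrightarrow> integrable lborel (\<lambda>t. std_normal_density t * f t)"
    unfolding gauss_marginal[OF u] N01_def
    by (subst integrable_density) auto
  finally show "integrable std_gaussian (\<lambda>x. f (u \<bullet> x)) \<longleftrightarrow> integrable lborel (\<lambda>t. std_normal_density t * f t)" .
  have "integral\<^sup>L std_gaussian (\<lambda>x. f (u \<bullet> x)) = integral\<^sup>L (distr std_gaussian borel (\<lambda>x. u \<bullet> x)) f"
    by (rule integral_distr[OF m f, symmetric])
  also have "\<dots> = integral\<^sup>L lborel (\<lambda>t. std_normal_density t * f t)"
    unfolding gauss_marginal[OF u] N01_def
    by (subst integral_density) auto
  finally show "integral\<^sup>L std_gaussian (\<lambda>x. f (u \<bullet> x)) = integral\<^sup>L lborel (\<lambda>t. std_normal_density t * f t)" .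
qed

lemma gauss_marginal_AE:
  fixes u :: "real^'n::finite"
  assumes u: "norm u = 1" and P: "AE t in lborel. P t"
  shows "AE x in std_gaussian. P (u \<bullet> x)"
proof (rule AE_distrD[where M'=borel and f="\<lambda>x. u \<bullet> x"])
  show "(\<lambda>x. u \<bullet> x) \<in> measurable std_gaussian borel" by measurable
  show "AE x in distr std_gaussian borel (\<lambda>x. u \<bullet> x). P x"
    unfolding gauss_marginal[OF u] N01_def using P by (subst AE_density) (auto elim!: AE_mp)
qed

lemma ln_int01:
  shows "set_integrable lborel {0<..<1} (\<lambda>t::real. - ln t)"
    and "(LBINT t:{0<..<1}. - ln (t::real)) = 1"
proof -
  let ?F = "\<lambda>t::real. t - t * ln t"
  have D: "\<And>x. 0 < ereal x \<Longrightarrow> ereal x < ereal 1 \<Longrightarrow> DERIV ?F x :> - ln x"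
    by (auto intro!: derivative_eq_intros simp: field_simps)
  have C: "\<And>x. 0 < ereal x \<Longrightarrow> ereal x < ereal 1 \<Longrightarrow> isCont (\<lambda>t. - ln t) x"
    by (auto intro!: continuous_intros)
  have N: "AE x in lborel. 0 < ereal x \<longrightarrow> ereal x < ereal 1 \<longrightarrow> 0 \<le> - ln x"
    by (auto intro!: AE_I2)
  have A: "((?F \<circ> real_of_ereal) \<longlongrightarrow> 0) (at_right 0)"
    unfolding zero_ereal_def ereal_tendsto_simps by real_asymp
  have B: "((?F \<circ> real_of_ereal) \<longlongrightarrow> 1) (at_left (ereal 1))"
    unfolding ereal_tendsto_simps by real_asymp
  have "0 < ereal 1" by simp
  note R = interval_integral_FTC_nonneg[OF this D C N A B]
  show "set_integrable lborel {0<..<1} (\<lambda>t::real. - ln t)"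
    using R(1) by (simp add: zero_ereal_def)
  show "(LBINT t:{0<..<1}. - ln (t::real)) = 1"
    using R(2) by (simp add: interval_lebesgue_integral_def zero_ereal_def)
qed

lemma ln2_int01:
  shows "set_integrable lborel {0<..<1} (\<lambda>t::real. (ln t)\<^sup>2)"
    and "(LBINT t:{0<..<1}. (ln (t::real))\<^sup>2) = 2"
proof -
  let ?F = "\<lambda>t::real. t * (ln t)\<^sup>2 - 2 * t * ln t + 2 * t"
  have D: "\<And>x. 0 < ereal x \<Longrightarrow> ereal x < ereal 1 \<Longrightarrow> DERIV ?F x :> (ln x)\<^sup>2"
    by (auto intro!: derivative_eq_intros simp: field_simps power2_eq_square)
  have C: "\<And>x. 0 < ereal x \<Longrightarrow> ereal x < ereal 1 \<Longrightarrow> isCont (\<lambda>t. (ln t)\<^sup>2) x"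
    by (auto intro!: continuous_intros)
  have N: "AE x in lborel. 0 < ereal x \<longrightarrow> ereal x < ereal 1 \<longrightarrow> 0 \<le> (ln x)\<^sup>2"
    by (auto intro!: AE_I2)
  have A: "((?F \<circ> real_of_ereal) \<longlongrightarrow> 0) (at_right 0)"
    unfolding zero_ereal_def ereal_tendsto_simps by real_asymp
  have B: "((?F \<circ> real_of_ereal) \<longlongrightarrow> 2) (at_left (ereal 1))"
    unfolding ereal_tendsto_simps by real_asymp
  have "0 < ereal 1" by simp
  note R = interval_integral_FTC_nonneg[OF this D C N A B]
  show "set_integrable lborel {0<..<1} (\<lambda>t::real. (ln t)\<^sup>2)"
    using R(1) by (simp add: zero_ereal_def)
  show "(LBINT t:{0<..<1}. (ln (t::real))\<^sup>2) = 2"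
    using R(2) by (simp add: interval_lebesgue_integral_def zero_ereal_def)
qed

lemma even_integral:
  fixes f :: "real \<Rightarrow> real"
  assumes f[measurable]: "f \<in> borel_measurable borel" and ev: "\<And>t. f (- t) = f t"
    and si: "set_integrable lborel {0<..} f"
  shows "integrable lborel f" and "integral\<^sup>L lborel f = 2 * (LBINT t:{0<..}. f t)"
proof -
  define g where "g t = indicator {0<..} t * f t" for t :: real
  have gm[measurable]: "g \<in> borel_measurable borel" unfolding g_def[abs_def] by measurable
  have ig: "integrable lborel g" using si by (simp add: set_integrable_def g_def[abs_def])
  have ig': "integrable lborel (\<lambda>t. g (0 + (-1) * t))"
    by (rule lborel_integrable_real_affine[OF ig]) simp
  have ae: "AE t in lborel. f t = g t + g (0 + (-1) * t)"
    using AE_lborel_singleton[of 0] by eventually_elim (auto simp: g_def indicator_def ev)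
  have "integrable lborel (\<lambda>t. g t + g (0 + (-1) * t))" using ig ig' by simp
  then show i: "integrable lborel f"
    by (rule integrable_cong_AE_imp) (use ae in \<open>auto elim: AE_mp\<close>)
  have "integral\<^sup>L lborel f = integral\<^sup>L lborel (\<lambda>t. g t + g (0 + (-1) * t))"
    by (rule integral_cong_AE) (use ae in auto)
  also have "\<dots> = integral\<^sup>L lborel g + integral\<^sup>L lborel (\<lambda>t. g (0 + (-1) * t))"
    using ig ig' by simp
  also have "integral\<^sup>L lborel (\<lambda>t. g (0 + (-1) * t)) = integral\<^sup>L lborel g"
    using lborel_integral_real_affine[of "-1" g 0] by simp
  finally show "integral\<^sup>L lborel f = 2 * (LBINT t:{0<..}. f t)"
    by (simp add: set_lebesgue_integral_def g_def[abs_def])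
qed

lemma std_normal_density_le_c: "std_normal_density t \<le> 1 / sqrt (2 * pi)"
proof -
  have "exp (- t\<^sup>2 / 2) \<le> 1" by simp
  then have "1 / sqrt (2 * pi) * exp (- t\<^sup>2 / 2) \<le> 1 / sqrt (2 * pi) * 1"
    by (intro mult_left_mono) auto
  then show ?thesis by (simp add: std_normal_density_def)
qed

lemma std_normal_density_le: "std_normal_density t \<le> 1"
proof -
  have "1 / sqrt (2 * pi) \<le> 1"
    using pi_gt3 by (simp add: divide_le_eq real_le_rsqrt)
  then show ?thesis using std_normal_density_le_c[of t] by linarith
qed

lemma std_normal_density_even: "std_normal_density (- t) = std_normal_density t"
  by (simp add: std_normal_density_def)

lemma sq_moment:
  shows "integrable lborel (\<lambda>t. std_normal_density t * t\<^sup>2)"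
    and "integral\<^sup>L lborel (\<lambda>t. std_normal_density t * t\<^sup>2) = 1"
  using integrable_std_normal_moment[of 2] integral_std_normal_moment_even[of 1]
  by (simp_all add: fact_numeral)

definition gg :: "real \<Rightarrow> real" where "gg s = (min (ln s) 0)\<^sup>2"

lemma gg_measurable[measurable]: "gg \<in> borel_measurable borel"
  unfolding gg_def[abs_def] by measurable

lemma gg_nonneg: "0 \<le> gg s" by (simp add: gg_def)

lemma ln_sq_le: "ln (t\<^sup>2) \<le> t\<^sup>2" for t :: real
proof (cases "t = 0")
  case False
  then have "t\<^sup>2 > 0" by simp
  then show ?thesis using ln_le_minus_one[of "t\<^sup>2"] by linarith
qed simp

lemma lnsq_normal:
  shows "integrable lborel (\<lambda>t. std_normal_density t * ln (t\<^sup>2))"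
    and "integral\<^sup>L lborel (\<lambda>t. std_normal_density t * ln (t\<^sup>2)) = C0"
proof -
  let ?h = "\<lambda>t::real. std_normal_density t * ln (t\<^sup>2)"
  have hm[measurable]: "?h \<in> borel_measurable borel" by measurable
  have ev: "?h (- t) = ?h t" for t by (simp add: std_normal_density_even)
  define D where "D t = 2 * (indicator {0<..<1} t *\<^sub>R (- ln t)) + std_normal_density t * t\<^sup>2" for t :: real
  have iD: "integrable lborel D"
  proof -
    have i1: "integrable lborel (\<lambda>t. indicator {0<..<1} t *\<^sub>R (- ln (t::real)))"
      using ln_int01(1) unfolding set_integrable_def .
    have "integrable lborel (\<lambda>t. 2 * (indicator {0<..<1} t *\<^sub>R (- ln (t::real))) + std_normal_density t * t\<^sup>2)"
      by (intro Bochner_Integration.integrable_add integrable_mult_right i1 sq_moment(1))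
    then show ?thesis unfolding D_def[abs_def] .
  qed
  have bound: "\<bar>indicator {0<..} t * ?h t\<bar> \<le> D t" for t
  proof -
    have p: "0 < std_normal_density t" "std_normal_density t \<le> 1"
      using normal_density_pos[of 1 0 t] std_normal_density_le[of t] by auto
    have q: "0 \<le> std_normal_density t * t\<^sup>2" using p by simp
    show ?thesis
    proof (cases "t \<le> 0")
      case True
      then show ?thesis using q by (simp add: indicator_def D_def)
    next
      case False
      then have t: "t > 0" by simp
      have l: "ln (t\<^sup>2) = 2 * ln t" using t by (simp add: ln_realpow)
      show ?thesis
      proof (cases "t < 1")
        case True
        have lt: "ln t \<le> 0" using t True by simp
        have a: "\<bar>?h t\<bar> = std_normal_density t * (- (2 * ln t))"
          using l lt p by (simp add: abs_mult abs_of_nonpos)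
        have b: "std_normal_density t * (- (2 * ln t)) \<le> - (2 * ln t)"
          by (rule mult_left_le_one_le) (use lt p in auto)
        have d: "D t = 2 * (- ln t) + std_normal_density t * t\<^sup>2"
          using t True by (simp add: D_def indicator_def)
        have "\<bar>indicator {0<..} t * ?h t\<bar> = \<bar>?h t\<bar>" using t by (simp add: indicator_def)
        then show ?thesis using a b q d by linarith
      next
        case False
        have lt: "ln t \<ge> 0" using False by simp
        have a: "\<bar>?h t\<bar> = std_normal_density t * ln (t\<^sup>2)"
          using l lt p by (simp add: abs_mult)
        have b: "std_normal_density t * ln (t\<^sup>2) \<le> std_normal_density t * t\<^sup>2"
          by (rule mult_left_mono) (use ln_sq_le[of t] p in auto)
        have "D t = std_normal_density t * t\<^sup>2"
          using t False by (simp add: D_def indicator_def)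
        then show ?thesis using a b t by (simp add: indicator_def)
      qed
    qed
  qed
  have si: "set_integrable lborel {0<..} ?h"
    unfolding set_integrable_def
  proof (rule Bochner_Integration.integrable_bound[OF iD])
    show "(\<lambda>t. indicator {0<..} t *\<^sub>R ?h t) \<in> borel_measurable lborel" by measurable
    show "AE t in lborel. norm (indicator {0<..} t *\<^sub>R ?h t) \<le> norm (D t)"
    proof (rule AE_I2)
      fix t :: real
      have "\<bar>indicator {0<..} t * ?h t\<bar> \<le> D t" by (rule bound)
      then show "norm (indicator {0<..} t *\<^sub>R ?h t) \<le> norm (D t)" by simp
    qed
  qed
  show "integrable lborel ?h" by (rule even_integral(1)[OF hm ev si])
  have "integral\<^sup>L lborel ?h = 2 * (LBINT t:{0<..}. ?h t)"
    by (rule even_integral(2)[OF hm ev si])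
  also have "(LBINT t:{0<..}. ?h t) = (LBINT t:{0<..}. 2 / sqrt (2 * pi) * (ln t * exp (- t\<^sup>2 / 2)))"
    by (rule set_lebesgue_integral_cong) (auto simp: std_normal_density_def ln_realpow)
  also have "\<dots> = 2 / sqrt (2 * pi) * (LBINT t:{0<..}. ln t * exp (- t\<^sup>2 / 2))"
    by (rule set_integral_mult_right)
  finally show "integral\<^sup>L lborel ?h = C0" by (simp add: C0_def)
qed

lemma gg_normal:
  shows "integrable lborel (\<lambda>t. std_normal_density t * gg (t\<^sup>2))"
    and "integral\<^sup>L lborel (\<lambda>t. std_normal_density t * gg (t\<^sup>2)) \<le> 7"
proof -
  let ?h = "\<lambda>t::real. std_normal_density t * gg (t\<^sup>2)"
  have hm[measurable]: "?h \<in> borel_measurable borel" by measurable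
  have ev: "?h (- t) = ?h t" for t by (simp add: std_normal_density_even)
  define c where "c = 1 / sqrt (2 * pi)"
  have c0: "c \<ge> 0" by (simp add: c_def)
  define D where "D t = c * 4 * (indicator {0<..<1} t *\<^sub>R (ln t)\<^sup>2)" for t :: real
  have iD: "integrable lborel D"
  proof -
    have i1: "integrable lborel (\<lambda>t. indicator {0<..<1} t *\<^sub>R (ln (t::real))\<^sup>2)"
      using ln2_int01(1) unfolding set_integrable_def .
    have "integrable lborel (\<lambda>t. c * 4 * (indicator {0<..<1} t *\<^sub>R (ln (t::real))\<^sup>2))"
      by (intro integrable_mult_right i1)
    then show ?thesis unfolding D_def[abs_def] .
  qed
  have bound: "\<bar>indicator {0<..} t * ?h t\<bar> \<le> D t" for t
  proof -
    have p: "0 < std_normal_density t" "std_normal_density t \<le> c"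
      using normal_density_pos[of 1 0 t] std_normal_density_le_c[of t] by (auto simp: c_def)
    show ?thesis
    proof (cases "t \<le> 0")
      case True then show ?thesis by (simp add: indicator_def D_def)
    next
      case False
      then have t: "t > 0" by simp
      have l: "ln (t\<^sup>2) = 2 * ln t" using t by (simp add: ln_realpow)
      show ?thesis
      proof (cases "t < 1")
        case True
        have "ln t \<le> 0" using t True by simp
        then have g: "gg (t\<^sup>2) = 4 * (ln t)\<^sup>2" using l by (simp add: gg_def power2_eq_square)
        have "\<bar>?h t\<bar> = std_normal_density t * (4 * (ln t)\<^sup>2)"
          using g p by (simp add: abs_mult)
        also have "\<dots> \<le> c * (4 * (ln t)\<^sup>2)"
          by (rule mult_right_mono) (use p in auto)
        finally show ?thesis using t True by (simp add: D_def indicator_def)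
      next
        case False
        have "ln t \<ge> 0" using False by simp
        then have "gg (t\<^sup>2) = 0" using l by (simp add: gg_def)
        then show ?thesis using t False by (simp add: D_def indicator_def)
      qed
    qed
  qed
  have si: "set_integrable lborel {0<..} ?h"
    unfolding set_integrable_def
  proof (rule Bochner_Integration.integrable_bound[OF iD])
    show "(\<lambda>t. indicator {0<..} t *\<^sub>R ?h t) \<in> borel_measurable lborel" by measurable
    show "AE t in lborel. norm (indicator {0<..} t *\<^sub>R ?h t) \<le> norm (D t)"
    proof (rule AE_I2)
      fix t :: real
      have "\<bar>indicator {0<..} t * ?h t\<bar> \<le> D t" by (rule bound)
      then show "norm (indicator {0<..} t *\<^sub>R ?h t) \<le> norm (D t)" by simp
    qed
  qed
  show "integrable lborel ?h" by (rule even_integral(1)[OF hm ev si])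
  have "integral\<^sup>L lborel ?h = 2 * (LBINT t:{0<..}. ?h t)"
    by (rule even_integral(2)[OF hm ev si])
  also have "(LBINT t:{0<..}. ?h t) \<le> integral\<^sup>L lborel D"
    unfolding set_lebesgue_integral_def
  proof (rule integral_mono[OF _ iD])
    show "integrable lborel (\<lambda>t. indicator {0<..} t *\<^sub>R ?h t)" using si by (simp add: set_integrable_def)
    fix t :: real
    have "\<bar>indicator {0<..} t * ?h t\<bar> \<le> D t" by (rule bound)
    then show "indicator {0<..} t *\<^sub>R ?h t \<le> D t" by simp
  qed
  also have "integral\<^sup>L lborel D = c * 4 * (LBINT t:{0<..<1}. (ln (t::real))\<^sup>2)"
    unfolding D_def set_lebesgue_integral_def by (rule integral_mult_right_zero)
  also have "\<dots> = c * 8" using ln2_int01(2) by simp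
  finally have "integral\<^sup>L lborel ?h \<le> 16 * c" by simp
  also have "16 * c \<le> 7"
  proof -
    have "16 / 7 \<le> sqrt (2 * pi)" using pi_gt3 by (intro real_le_rsqrt) (simp add: power2_eq_square)
    then show ?thesis by (simp add: c_def field_simps)
  qed
  finally show "integral\<^sup>L lborel ?h \<le> 7" .
qed

lemma psi_mono: "a \<le> b \<Longrightarrow> (max a 0)\<^sup>2 \<le> (max b 0)\<^sup>2" for a b :: real
  by (intro power_mono) auto

lemma sq_convex2:
  fixes u v p q :: real
  assumes "u \<ge> 0" "v \<ge> 0" "u + v = 1"
  shows "(u * p + v * q)\<^sup>2 \<le> u * p\<^sup>2 + v * q\<^sup>2"
proof -
  have v: "v = 1 - u" using assms by simp
  have "u * p\<^sup>2 + v * q\<^sup>2 - (u * p + v * q)\<^sup>2 = u * v * (p - q)\<^sup>2"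
    unfolding v by (simp add: power2_eq_square algebra_simps)
  moreover have "u * v * (p - q)\<^sup>2 \<ge> 0" using assms by simp
  ultimately show ?thesis by linarith
qed

lemma psi_convex:
  fixes u v a b :: real
  assumes "u \<ge> 0" "v \<ge> 0" "u + v = 1"
  shows "(max (u * a + v * b) 0)\<^sup>2 \<le> u * (max a 0)\<^sup>2 + v * (max b 0)\<^sup>2"
proof -
  have "u * a \<le> u * max a 0" by (rule mult_left_mono) (use assms in auto)
  moreover have "v * b \<le> v * max b 0" by (rule mult_left_mono) (use assms in auto)
  moreover have "0 \<le> u * max a 0 + v * max b 0" using assms by simp
  ultimately have "max (u * a + v * b) 0 \<le> u * max a 0 + v * max b 0" by simp
  then have "(max (u * a + v * b) 0)\<^sup>2 \<le> (u * max a 0 + v * max b 0)\<^sup>2"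
    by (intro power_mono) auto
  also have "\<dots> \<le> u * (max a 0)\<^sup>2 + v * (max b 0)\<^sup>2"
    by (rule sq_convex2[OF assms])
  finally show ?thesis .
qed

lemma gg_alt: "gg s = (max (- ln s) 0)\<^sup>2"
proof -
  have "min (ln s) 0 = - max (- ln s) 0" by (simp add: min_def max_def)
  then show ?thesis by (simp add: gg_def)
qed

lemma gg_convex: "convex_on {0<..} gg"
  unfolding convex_on_def
proof (intro conjI ballI allI impI)
  show "convex ({0<..} :: real set)" by simp
  fix x y u v :: real
  assume x: "x \<in> {0<..}" and y: "y \<in> {0<..}" and u: "u \<ge> 0" and v: "v \<ge> 0" and uv: "u + v = 1"
  have "ln (u *\<^sub>R x + v *\<^sub>R y) \<ge> u * ln x + v * ln y"
    using ln_concave x y u v uv unfolding concave_on_iff by blast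
  then have "- ln (u * x + v * y) \<le> u * (- ln x) + v * (- ln y)" by simp
  then have "gg (u * x + v * y) \<le> (max (u * (- ln x) + v * (- ln y)) 0)\<^sup>2"
    unfolding gg_alt by (rule psi_mono)
  also have "\<dots> \<le> u * gg x + v * gg y"
    unfolding gg_alt by (rule psi_convex[OF u v uv])
  finally show "gg (u *\<^sub>R x + v *\<^sub>R y) \<le> u * gg x + v * gg y" by simp
qed

lemma ln_sq_le_self:
  fixes s :: real assumes s: "s \<ge> 1"
  shows "(ln s)\<^sup>2 \<le> s"
proof -
  define r where "r = sqrt (sqrt s)"
  have r1: "r \<ge> 1" using s by (simp add: r_def)
  have r4: "r\<^sup>2 * r\<^sup>2 = s" using s by (simp add: r_def)
  have "ln s = ln (r\<^sup>2 * r\<^sup>2)" using r4 by simp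
  also have "\<dots> = 4 * ln r" using r1 by (simp add: ln_mult ln_realpow)
  finally have ls: "ln s = 4 * ln r" .
  have "ln r \<le> r - 1" using r1 by (intro ln_le_minus_one) simp
  moreover have "ln r \<ge> 0" using r1 by simp
  ultimately have "ln s \<le> 4 * (r - 1)" "0 \<le> ln s" using ls by auto
  then have "(ln s)\<^sup>2 \<le> (4 * (r - 1))\<^sup>2" by (intro power_mono) auto
  also have "\<dots> \<le> (r\<^sup>2)\<^sup>2"
  proof (intro power_mono)
    have "0 \<le> (r - 2)\<^sup>2" by simp
    then show "4 * (r - 1) \<le> r\<^sup>2" by (simp add: power2_eq_square algebra_simps)
    show "0 \<le> 4 * (r - 1)" using r1 by simp
  qed
  also have "\<dots> = s" using r4 by (simp add: power2_eq_square)
  finally show ?thesis .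
qed

lemma lnsq_bound:
  fixes s :: real assumes s: "s > 0"
  shows "(ln s)\<^sup>2 \<le> gg s + s"
proof (cases "s < 1")
  case True
  then have "ln s < 0" using s by simp
  then have "gg s = (ln s)\<^sup>2" by (simp add: gg_def)
  then show ?thesis using s by simp
next
  case False
  then have "ln s \<ge> 0" by simp
  then have "gg s = 0" by (simp add: gg_def)
  then show ?thesis using ln_sq_le_self[of s] False by simp
qed

lemma marg_facts:
  fixes u :: "real^'n::finite"
  assumes u: "norm u = 1"
  shows "integrable std_gaussian (\<lambda>x. (u \<bullet> x)\<^sup>2)"
    and "integral\<^sup>L std_gaussian (\<lambda>x. (u \<bullet> x)\<^sup>2) = 1"
    and "integrable std_gaussian (\<lambda>x. ln ((u \<bullet> x)\<^sup>2))"
    and "integral\<^sup>L std_gaussian (\<lambda>x. ln ((u \<bullet> x)\<^sup>2)) = C0"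
    and "integrable std_gaussian (\<lambda>x. gg ((u \<bullet> x)\<^sup>2))"
    and "integral\<^sup>L std_gaussian (\<lambda>x. gg ((u \<bullet> x)\<^sup>2)) \<le> 7"
    and "AE x in std_gaussian. u \<bullet> x \<noteq> 0"
proof -
  note M1 = gauss_marginal_integral[OF u, of "\<lambda>t. t\<^sup>2"]
  note M2 = gauss_marginal_integral[OF u, of "\<lambda>t. ln (t\<^sup>2)"]
  note M3 = gauss_marginal_integral[OF u, of "\<lambda>t. gg (t\<^sup>2)"]
  show "integrable std_gaussian (\<lambda>x. (u \<bullet> x)\<^sup>2)" using M1 sq_moment by simp
  show "integral\<^sup>L std_gaussian (\<lambda>x. (u \<bullet> x)\<^sup>2) = 1" using M1 sq_moment by simp
  show "integrable std_gaussian (\<lambda>x. ln ((u \<bullet> x)\<^sup>2))" using M2 lnsq_normal by simp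
  show "integral\<^sup>L std_gaussian (\<lambda>x. ln ((u \<bullet> x)\<^sup>2)) = C0" using M2 lnsq_normal by simp
  show "integrable std_gaussian (\<lambda>x. gg ((u \<bullet> x)\<^sup>2))" using M3 gg_normal by simp
  show "integral\<^sup>L std_gaussian (\<lambda>x. gg ((u \<bullet> x)\<^sup>2)) \<le> 7" using M3 gg_normal by simp
  show "AE x in std_gaussian. u \<bullet> x \<noteq> 0"
    by (rule gauss_marginal_AE[OF u AE_lborel_singleton])
qed

theorem theorem3p3:
  fixes q :: "real ^ 'n \<Rightarrow> real"
  assumes "quadratic_form q"
    and "\<forall>x. q x \<ge> 0"
    and "gaussE q = 1"
  shows "integrable std_gaussian (\<lambda>x. ln (q x)) \<and>
         integrable std_gaussian (\<lambda>x. (ln (q x))\<^sup>2) \<and>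
         C0 \<le> gaussE (\<lambda>x. ln (q x)) \<and> gaussE (\<lambda>x. ln (q x)) \<le> 0 \<and>
         0 \<le> gaussE (\<lambda>x. (ln (q x))\<^sup>2) \<and> gaussE (\<lambda>x. (ln (q x))\<^sup>2) \<le> 8"
proof -
  interpret G: prob_space "std_gaussian :: (real^'n) measure" by (rule prob_space_std_gaussian)
  obtain m :: nat and V :: "nat \<Rightarrow> real^'n" where qV: "\<forall>x. q x = (\<Sum>k<m. (V k \<bullet> x)\<^sup>2)"
    using quadratic_form_sos[OF assms(1,2)] by blast
  define J where "J = {k. k < m \<and> V k \<noteq> 0}"
  define w where "w k = (norm (V k))\<^sup>2" for k
  define U where "U k = V k /\<^sub>R norm (V k)" for k
  have finJ: "finite J" by (simp add: J_def)
  have wpos: "w k > 0" if "k \<in> J" for k using that by (simp add: w_def J_def)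
  have Unorm: "norm (U k) = 1" if "k \<in> J" for k using that by (simp add: U_def J_def)
  have VU: "(V k \<bullet> x)\<^sup>2 = w k * (U k \<bullet> x)\<^sup>2" if "k \<in> J" for k x
    using that by (simp add: U_def w_def J_def power2_eq_square field_simps)
  have qJ: "q = (\<lambda>x. \<Sum>k\<in>J. w k * (U k \<bullet> x)\<^sup>2)"
  proof
    fix x
    have "q x = (\<Sum>k<m. (V k \<bullet> x)\<^sup>2)" using qV by simp
    also have "\<dots> = (\<Sum>k\<in>J. (V k \<bullet> x)\<^sup>2)"
      by (rule sum.mono_neutral_right) (auto simp: J_def)
    also have "\<dots> = (\<Sum>k\<in>J. w k * (U k \<bullet> x)\<^sup>2)"
      by (intro sum.cong refl VU)
    finally show "q x = (\<Sum>k\<in>J. w k * (U k \<bullet> x)\<^sup>2)" .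
  qed
  note MF = marg_facts[OF Unorm]
  have qm[measurable]: "q \<in> borel_measurable std_gaussian" unfolding qJ by measurable
  have iq: "integrable std_gaussian q"
    unfolding qJ by (intro Bochner_Integration.integrable_sum integrable_mult_right MF(1))
  have Eq: "integral\<^sup>L std_gaussian q = (\<Sum>k\<in>J. w k)"
    unfolding qJ by (simp add: integral_sum integrable_mult_right MF(1,2))
  have sw: "(\<Sum>k\<in>J. w k) = 1" using assms(3) Eq by (simp add: gaussE_def)
  then have Jne: "J \<noteq> {}" by auto
  have AEpos: "AE x in std_gaussian. \<forall>k\<in>J. U k \<bullet> x \<noteq> 0"
    by (rule AE_finite_allI[OF finJ]) (rule MF(7))
  have jensen1: "(\<Sum>k\<in>J. w k * ln ((U k \<bullet> x)\<^sup>2)) \<le> ln (q x)" and qpos: "q x > 0"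
    and jensen2: "gg (q x) \<le> (\<Sum>k\<in>J. w k * gg ((U k \<bullet> x)\<^sup>2))"
    if x: "\<forall>k\<in>J. U k \<bullet> x \<noteq> 0" for x
  proof -
    have Ypos: "(U k \<bullet> x)\<^sup>2 > 0" if "k \<in> J" for k using x that by auto
    have qx: "q x = (\<Sum>k\<in>J. w k *\<^sub>R (U k \<bullet> x)\<^sup>2)" using qJ by simp
    show "q x > 0" unfolding qx
      using Jne finJ by (intro sum_pos) (auto intro!: mult_pos_pos wpos Ypos)
    have cl: "convex_on {0<..} (\<lambda>s. - ln s)"
      using ln_concave by (simp add: concave_on_def)
    have "- ln (\<Sum>k\<in>J. w k *\<^sub>R (U k \<bullet> x)\<^sup>2) \<le> (\<Sum>k\<in>J. w k * - ln ((U k \<bullet> x)\<^sup>2))"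
      by (rule convex_on_sum[OF finJ Jne cl sw]) (use x wpos in \<open>auto intro: less_imp_le\<close>)
    then show "(\<Sum>k\<in>J. w k * ln ((U k \<bullet> x)\<^sup>2)) \<le> ln (q x)"
      unfolding qx by (simp add: sum_negf)
    show "gg (q x) \<le> (\<Sum>k\<in>J. w k * gg ((U k \<bullet> x)\<^sup>2))"
      unfolding qx
      by (rule convex_on_sum[OF finJ Jne gg_convex sw]) (use x wpos in \<open>auto intro: less_imp_le\<close>)
  qed
  have ilnY: "integrable std_gaussian (\<lambda>x. \<Sum>k\<in>J. w k * ln ((U k \<bullet> x)\<^sup>2))"
    by (intro Bochner_Integration.integrable_sum integrable_mult_right MF(3))
  have iabslnY: "integrable std_gaussian (\<lambda>x. \<Sum>k\<in>J. w k * \<bar>ln ((U k \<bullet> x)\<^sup>2)\<bar>)"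
    by (intro Bochner_Integration.integrable_sum integrable_mult_right integrable_abs MF(3))
  have iggY: "integrable std_gaussian (\<lambda>x. \<Sum>k\<in>J. w k * gg ((U k \<bullet> x)\<^sup>2))"
    by (intro Bochner_Integration.integrable_sum integrable_mult_right MF(5))
  have i1: "integrable std_gaussian (\<lambda>x. ln (q x))"
  proof (rule Bochner_Integration.integrable_bound)
    show "integrable std_gaussian (\<lambda>x. q x + (\<Sum>k\<in>J. w k * \<bar>ln ((U k \<bullet> x)\<^sup>2)\<bar>))"
      by (intro Bochner_Integration.integrable_add iq iabslnY)
    show "(\<lambda>x. ln (q x)) \<in> borel_measurable std_gaussian" by measurable
    show "AE x in std_gaussian. norm (ln (q x)) \<le> norm (q x + (\<Sum>k\<in>J. w k * \<bar>ln ((U k \<bullet> x)\<^sup>2)\<bar>))"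
      using AEpos
    proof eventually_elim
      case (elim x)
      have qp: "q x > 0" by (rule qpos[OF elim])
      have up: "ln (q x) \<le> q x" using ln_le_minus_one[OF qp] by linarith
      have "- (\<Sum>k\<in>J. w k * \<bar>ln ((U k \<bullet> x)\<^sup>2)\<bar>) \<le> (\<Sum>k\<in>J. w k * ln ((U k \<bullet> x)\<^sup>2))"
        unfolding sum_negf[symmetric]
      proof (intro sum_mono)
        fix k assume k: "k \<in> J"
        have "w k * (- \<bar>ln ((U k \<bullet> x)\<^sup>2)\<bar>) \<le> w k * ln ((U k \<bullet> x)\<^sup>2)"
          by (rule mult_left_mono) (use wpos[OF k] in auto)
        then show "- (w k * \<bar>ln ((U k \<bullet> x)\<^sup>2)\<bar>) \<le> w k * ln ((U k \<bullet> x)\<^sup>2)" by simp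
      qed
      with jensen1[OF elim] have lo: "- (\<Sum>k\<in>J. w k * \<bar>ln ((U k \<bullet> x)\<^sup>2)\<bar>) \<le> ln (q x)" by linarith
      have nn: "0 \<le> (\<Sum>k\<in>J. w k * \<bar>ln ((U k \<bullet> x)\<^sup>2)\<bar>)"
        by (intro sum_nonneg) (use wpos in \<open>auto simp: less_imp_le\<close>)
      show ?case using up lo nn qp by simp
    qed
  qed
  have i2: "integrable std_gaussian (\<lambda>x. (ln (q x))\<^sup>2)"
  proof (rule Bochner_Integration.integrable_bound)
    show "integrable std_gaussian (\<lambda>x. (\<Sum>k\<in>J. w k * gg ((U k \<bullet> x)\<^sup>2)) + q x)"
      by (intro Bochner_Integration.integrable_add iq iggY)
    show "(\<lambda>x. (ln (q x))\<^sup>2) \<in> borel_measurable std_gaussian" by measurable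
    show "AE x in std_gaussian. norm ((ln (q x))\<^sup>2) \<le> norm ((\<Sum>k\<in>J. w k * gg ((U k \<bullet> x)\<^sup>2)) + q x)"
      using AEpos
    proof eventually_elim
      case (elim x)
      have qp: "q x > 0" by (rule qpos[OF elim])
      have "(ln (q x))\<^sup>2 \<le> gg (q x) + q x" by (rule lnsq_bound[OF qp])
      with jensen2[OF elim] have "(ln (q x))\<^sup>2 \<le> (\<Sum>k\<in>J. w k * gg ((U k \<bullet> x)\<^sup>2)) + q x" by linarith
      then show ?case by simp
    qed
  qed
  have E1up: "integral\<^sup>L std_gaussian (\<lambda>x. ln (q x)) \<le> 0"
  proof -
    have "integral\<^sup>L std_gaussian (\<lambda>x. ln (q x)) \<le> integral\<^sup>L std_gaussian (\<lambda>x. q x - 1)"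
    proof (rule integral_mono_AE[OF i1])
      show "integrable std_gaussian (\<lambda>x. q x - 1)" using iq by simp
      show "AE x in std_gaussian. ln (q x) \<le> q x - 1"
        using AEpos by eventually_elim (use qpos ln_le_minus_one in blast)
    qed
    also have "\<dots> = 0" using iq Eq sw G.prob_space by simp
    finally show ?thesis .
  qed
  have E1lo: "C0 \<le> integral\<^sup>L std_gaussian (\<lambda>x. ln (q x))"
  proof -
    have "C0 = (\<Sum>k\<in>J. w k * C0)" using sw by (simp add: sum_distrib_right[symmetric])
    also have "\<dots> = integral\<^sup>L std_gaussian (\<lambda>x. \<Sum>k\<in>J. w k * ln ((U k \<bullet> x)\<^sup>2))"
      by (simp add: integral_sum integrable_mult_right MF(3,4))
    also have "\<dots> \<le> integral\<^sup>L std_gaussian (\<lambda>x. ln (q x))"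
      by (rule integral_mono_AE[OF ilnY i1]) (use AEpos jensen1 in \<open>auto elim: AE_mp\<close>)
    finally show ?thesis .
  qed
  have E2up: "integral\<^sup>L std_gaussian (\<lambda>x. (ln (q x))\<^sup>2) \<le> 8"
  proof -
    have "integral\<^sup>L std_gaussian (\<lambda>x. (ln (q x))\<^sup>2) \<le>
        integral\<^sup>L std_gaussian (\<lambda>x. (\<Sum>k\<in>J. w k * gg ((U k \<bullet> x)\<^sup>2)) + q x)"
    proof (rule integral_mono_AE[OF i2])
      show "integrable std_gaussian (\<lambda>x. (\<Sum>k\<in>J. w k * gg ((U k \<bullet> x)\<^sup>2)) + q x)"
        by (intro Bochner_Integration.integrable_add iq iggY)
      show "AE x in std_gaussian. (ln (q x))\<^sup>2 \<le> (\<Sum>k\<in>J. w k * gg ((U k \<bullet> x)\<^sup>2)) + q x"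
        using AEpos
      proof eventually_elim
        case (elim x)
        have qp: "q x > 0" by (rule qpos[OF elim])
        have "(ln (q x))\<^sup>2 \<le> gg (q x) + q x" by (rule lnsq_bound[OF qp])
        with jensen2[OF elim] show ?case by linarith
      qed
    qed
    also have "\<dots> = (\<Sum>k\<in>J. w k * integral\<^sup>L std_gaussian (\<lambda>x. gg ((U k \<bullet> x)\<^sup>2))) + 1"
      using iq iggY Eq sw by (simp add: integral_sum integrable_mult_right MF(5))
    also have "\<dots> \<le> (\<Sum>k\<in>J. w k * 7) + 1"
      by (intro add_mono sum_mono mult_left_mono MF(6)) (auto intro: less_imp_le wpos)
    also have "\<dots> = 8" using sw by (simp add: sum_distrib_right[symmetric])
    finally show ?thesis .
  qed
  have E2lo: "0 \<le> integral\<^sup>L std_gaussian (\<lambda>x. (ln (q x))\<^sup>2)"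
    by (rule integral_nonneg_AE) simp
  show ?thesis
    using i1 i2 E1up E1lo E2up E2lo by (simp add: gaussE_def)
qed

end
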